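(* Let $\mathbb{H}$ be a real Hilbert space, $\mathbf{x}$ a random vector in $\mathbb{H}$ with $\mathbb{E}[\|\mathbf{x}\|^2]<\infty$, and $\mathcal{S}\boldsymbol{\theta}=\mathbb{E}[\langle\boldsymbol{\theta},\mathbf{x}\rangle\mathbf{x}]$. Assume $\mathcal{S}$ has an orthonormal basis $(\mathbf{e}_i)$ of eigenvectors with eigenvalues $0<\lambda_i<\tfrac12$. Assume there is $\alpha>0$ such that for every $\beta<\alpha$ there is $C_\beta$ with $\mathbb{E}[\langle\boldsymbol{\theta},\mathbf{x}\rangle^2\langle\mathbf{x},\mathcal{S}^{-\beta}\mathbf{x}\rangle]\le C_\beta\langle\boldsymbol{\theta},\mathcal{S}^{1-\beta}\boldsymbol{\theta}\rangle$ for all $\boldsymbol{\theta}\in\mathbb{H}$. Let $\beta<\alpha$ and $0<\gamma<2/C_\beta$. Let $\boldsymbol{\theta}(0)\in\mathbb{H}$, let $\mathbf{x}(0),\mathbf{x}(1),\dots$ be i.i.d. copies of $\mathbf{x}$, and $\boldsymbol{\theta}(n+1)=\boldsymbol{\theta}(n)-\gamma\langle\boldsymbol{\theta}(n),\mathbf{x}(n)\rangle\mathbf{x}(n)$. Then the sequence $\mathbb{E}[\langle\boldsymbol{\theta}(n),\mathcal{S}^{-\beta}\boldsymbol{\theta}(n)\rangle]$ is decreasing in $n$, and thus bounded from above uniformly in $n$ by $M_\beta:=\langle\boldsymbol{\theta}(0),\mathcal{S}^{-\beta}\boldsymbol{\theta}(0)\rangle$.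
   Context: $\mathcal{S}^{\kappa}\boldsymbol{\theta}=\sum_i\lambda_i^{\kappa}\theta_i\mathbf{e}_i$ for $\boldsymbol{\theta}=\sum_i\theta_i\mathbf{e}_i$; quantities such as $\langle\boldsymbol{\theta},\mathcal{S}^{-\beta}\boldsymbol{\theta}\rangle=\sum_i\lambda_i^{-\beta}\theta_i^2$ take values in $[0,\infty]$. The step size satisfies $\gamma\in(0,1)$. *)

theory Defs
  imports "HOL-Probability.Probability"
begin

text \<open>Quadratic form of the fractional power of S in the eigenbasis (e_i), eigenvalues lam_i:
  qform I e lam k th = <th, S^k th> = sum over i in I of lam_i^k * <th,e_i>^2, valued in [0,infinity].\<close>
definition qform :: "'i set \<Rightarrow> ('i \<Rightarrow> 'a::real_inner) \<Rightarrow> ('i \<Rightarrow> real) \<Rightarrow> real \<Rightarrow> 'a \<Rightarrow> ennreal" where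
  "qform I e lam k th = (\<Sum>\<^sub>\<infinity> i\<in>I. ennreal (lam i powr k * (th \<bullet> e i)\<^sup>2))"

primrec sgd :: "real \<Rightarrow> 'a::real_inner \<Rightarrow> (nat \<Rightarrow> 'w \<Rightarrow> 'a) \<Rightarrow> nat \<Rightarrow> 'w \<Rightarrow> 'a" where
  "sgd g th0 Xs 0 w = th0"
| "sgd g th0 Xs (Suc n) w = sgd g th0 Xs n w - (g * (sgd g th0 Xs n w \<bullet> Xs n w)) *\<^sub>R Xs n w"

end

theory Submission imports Defs begin

lemma qform_SUP_fin:
  "qform I e lam k th = (SUP F\<in>{F. finite F \<and> F \<subseteq> I}. \<Sum>i\<in>F. ennreal (lam i powr k * (th \<bullet> e i)\<^sup>2))"
  unfolding qform_def by (rule nonneg_infsum_complete) simp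

definition Fk :: "'i set \<Rightarrow> nat \<Rightarrow> 'i set" where
  "Fk I n = {i\<in>I. to_nat_on I i < n}"

lemma Fk_sub: "Fk I n \<subseteq> I" unfolding Fk_def by auto

lemma Fk_finite: assumes "countable I" shows "finite (Fk I n)"
proof -
  have inj: "inj_on (to_nat_on I) (Fk I n)"
    by (rule inj_on_subset[OF inj_on_to_nat_on[OF assms] Fk_sub])
  have sub: "to_nat_on I ` Fk I n \<subseteq> {..<n}" unfolding Fk_def by auto
  have "finite (to_nat_on I ` Fk I n)" by (rule finite_subset[OF sub]) simp
  then show ?thesis by (rule finite_imageD[OF _ inj])
qed

lemma Fk_mono: "incseq (Fk I)"
  unfolding incseq_def Fk_def by auto

lemma Fk_cover: assumes "finite F" "F \<subseteq> I" shows "\<exists>n. F \<subseteq> Fk I n"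
proof
  show "F \<subseteq> Fk I (\<Sum>i\<in>F. Suc (to_nat_on I i))"
  proof
    fix i assume i: "i \<in> F"
    have "to_nat_on I i < Suc (to_nat_on I i)" by simp
    also have "\<dots> \<le> (\<Sum>i\<in>F. Suc (to_nat_on I i))"
      using member_le_sum[OF i, of "\<lambda>i. Suc (to_nat_on I i)"] assms(1) by simp
    finally show "i \<in> Fk I (\<Sum>i\<in>F. Suc (to_nat_on I i))" using i assms unfolding Fk_def by auto
  qed
qed

lemma SUP_fin_nat:
  fixes g :: "'i \<Rightarrow> ennreal"
  assumes "countable I"
  shows "(SUP F\<in>{F. finite F \<and> F \<subseteq> I}. sum g F) = (SUP n. sum g (Fk I n))"
proof (rule antisym)
  show "(SUP F\<in>{F. finite F \<and> F \<subseteq> I}. sum g F) \<le> (SUP n. sum g (Fk I n))"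
  proof (rule SUP_least)
    fix F assume "F \<in> {F. finite F \<and> F \<subseteq> I}"
    then have F: "finite F" "F \<subseteq> I" by auto
    then obtain n where "F \<subseteq> Fk I n" using Fk_cover by blast
    then have "sum g F \<le> sum g (Fk I n)"
      using F by (intro sum_mono2 Fk_finite assms) auto
    then show "sum g F \<le> (SUP n. sum g (Fk I n))" by (rule SUP_upper2[OF UNIV_I])
  qed
  show "(SUP n. sum g (Fk I n)) \<le> (SUP F\<in>{F. finite F \<and> F \<subseteq> I}. sum g F)"
  proof (rule SUP_mono)
    fix n :: nat
    have "Fk I n \<in> {F. finite F \<and> F \<subseteq> I}" using Fk_finite[OF assms] Fk_sub by simp
    then show "\<exists>m\<in>{F. finite F \<and> F \<subseteq> I}. sum g (Fk I n) \<le> sum g m" by blast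
  qed
qed

lemma qform_SUP_nat:
  assumes "countable I"
  shows "qform I e lam k th = (SUP n. \<Sum>i\<in>Fk I n. ennreal (lam i powr k * (th \<bullet> e i)\<^sup>2))"
  unfolding qform_SUP_fin by (rule SUP_fin_nat[OF assms])

lemma qform_meas:
  fixes e :: "'i \<Rightarrow> 'a::{real_inner, second_countable_topology}"
  assumes "countable I"
  shows "(\<lambda>v. qform I e lam k v) \<in> borel_measurable borel"
proof -
  have eq: "(\<lambda>v. qform I e lam k v) = (\<lambda>v. SUP n. \<Sum>i\<in>Fk I n. ennreal (lam i powr k * (v \<bullet> e i)\<^sup>2))"
    by (rule ext) (rule qform_SUP_nat[OF assms])
  have m: "(\<lambda>v. \<Sum>i\<in>Fk I n. ennreal (lam i powr k * (v \<bullet> e i)\<^sup>2)) \<in> borel_measurable borel" for n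
    by (intro borel_measurable_sum) measurable
  show ?thesis unfolding eq by (rule borel_measurable_SUP) (simp, rule m)
qed

lemma countable_orthonormal:
  fixes e :: "'i \<Rightarrow> 'a::{real_inner, second_countable_topology}"
  assumes orth: "\<And>i j. i \<in> I \<Longrightarrow> j \<in> I \<Longrightarrow> e i \<bullet> e j = (if i = j then 1 else 0)"
  shows "countable I"
proof -
  have d: "dist (e i) (e j) = sqrt 2" if "i \<in> I" "j \<in> I" "i \<noteq> j" for i j
  proof -
    have "(norm (e i - e j))\<^sup>2 = e i \<bullet> e i - 2 * (e i \<bullet> e j) + e j \<bullet> e j"
      by (simp add: power2_norm_eq_inner algebra_simps inner_commute)
    also have "\<dots> = 2" using orth that by simp
    finally show ?thesis by (simp add: dist_norm real_sqrt_unique)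
  qed
  have "countable ((\<lambda>i. ball (e i) (1/2)) ` I)"
  proof (rule countable_disjoint_open_subsets)
    show "pairwise disjnt ((\<lambda>i. ball (e i) (1/2)) ` I)"
    proof (clarsimp simp: pairwise_def)
      fix i j assume ij: "i \<in> I" "j \<in> I" "ball (e i) (1/2) \<noteq> ball (e j) (1/2)"
      then have "i \<noteq> j" by auto
      show "disjnt (ball (e i) (1/2)) (ball (e j) (1/2))"
      proof (rule ccontr)
        assume "\<not> ?thesis"
        then obtain x where "dist (e i) x < 1/2" "dist (e j) x < 1/2" by (auto simp: disjnt_def)
        then have "dist (e i) (e j) < 1" using dist_triangle2[of "e i" "e j" x] by linarith
        moreover have "sqrt 2 \<ge> (1::real)" by simp
        ultimately show False using d[OF ij(1,2) \<open>i \<noteq> j\<close>] by simp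
      qed
    qed
  qed auto
  moreover have "inj_on (\<lambda>i. ball (e i) (1/2)) I"
  proof (rule inj_onI)
    fix i j assume "i \<in> I" "j \<in> I" "ball (e i) (1/2::real) = ball (e j) (1/2)"
    moreover have "e i \<in> ball (e i) (1/2)" by simp
    ultimately have "e i \<in> ball (e j) (1/2)" by simp
    then have "dist (e j) (e i) < 1/2" by simp
    moreover have "sqrt 2 \<ge> (1::real)" by simp
    ultimately show "i = j"
    proof (cases "i = j")
      case False
      then have "dist (e j) (e i) = sqrt 2" using d[OF \<open>j\<in>I\<close> \<open>i\<in>I\<close>] by simp
      then show ?thesis using \<open>dist (e j) (e i) < 1/2\<close> \<open>sqrt 2 \<ge> 1\<close> by simp
    qed
  qed
  ultimately show ?thesis using countable_image_inj_on by blast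
qed

lemma powr_one_minus: "0 < (x::real) \<Longrightarrow> x powr (1 - b) = x * x powr (- b)"
  using powr_add[of x 1 "- b"] by simp

lemma pointwise:
  fixes M :: "'w measure"
    and X :: "'w \<Rightarrow> 'a::{real_inner, complete_space, second_countable_topology}"
    and I :: "'i set" and e :: "'i \<Rightarrow> 'a" and lam :: "'i \<Rightarrow> real"
    and \<beta> C \<gamma> :: real and t :: 'a
  assumes P: "prob_space M"
    and X_meas[measurable]: "X \<in> borel_measurable M"
    and X_sq: "(\<integral>\<^sup>+ w. ennreal ((norm (X w))\<^sup>2) \<partial>M) < \<infinity>"
    and Seig: "\<And>i. i \<in> I \<Longrightarrow> (\<integral> w. (e i \<bullet> X w) *\<^sub>R X w \<partial>M) = lam i *\<^sub>R e i"
    and orthonormal: "\<And>i j. i \<in> I \<Longrightarrow> j \<in> I \<Longrightarrow> e i \<bullet> e j = (if i = j then 1 else 0)"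
    and cI: "countable I"
    and lam_pos: "\<And>i. i \<in> I \<Longrightarrow> 0 < lam i"
    and lam_bound: "\<And>i. i \<in> I \<Longrightarrow> lam i < 1/2"
    and C_bound: "\<forall>th.
        (\<integral>\<^sup>+ w. ennreal ((th \<bullet> X w)\<^sup>2) * qform I e lam (- \<beta>) (X w) \<partial>M)
          \<le> ennreal C * qform I e lam (1 - \<beta>) th"
    and \<gamma>_pos: "0 < \<gamma>" and Cpos: "0 < C" and \<gamma>C: "\<gamma> * C < 2"
  shows "(\<integral>\<^sup>+ w. qform I e lam (- \<beta>) (t - (\<gamma> * (t \<bullet> X w)) *\<^sub>R X w) \<partial>M) \<le> qform I e lam (- \<beta>) t"
proof -
  interpret prob_space M by fact
  define Q where "Q = qform I e lam (- \<beta>) t"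
  define Q1 where "Q1 = qform I e lam (1 - \<beta>) t"
  define \<mu> where "\<mu> i = lam i powr (- \<beta>)" for i
  have \<mu>pos: "0 < \<mu> i" if "i \<in> I" for i unfolding \<mu>_def using lam_pos[OF that] by simp
  have l1: "\<And>i. i \<in> I \<Longrightarrow> lam i powr (1 - \<beta>) = lam i * \<mu> i"
    unfolding \<mu>_def using lam_pos powr_one_minus by blast
  show ?thesis
  proof (cases "Q = \<infinity>")
    case True then show ?thesis unfolding Q_def by simp
  next
    case False
    then have Qfin: "Q < \<infinity>" by (simp add: less_top)
    have "Q1 \<le> Q" unfolding Q1_def Q_def qform_SUP_fin
    proof (rule SUP_mono)
      fix F assume F: "F \<in> {F. finite F \<and> F \<subseteq> I}"
      have "(\<Sum>i\<in>F. ennreal (lam i powr (1 - \<beta>) * (t \<bullet> e i)\<^sup>2)) \<le> (\<Sum>i\<in>F. ennreal (lam i powr (- \<beta>) * (t \<bullet> e i)\<^sup>2))"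
      proof (rule sum_mono, rule ennreal_leI)
        fix i assume "i \<in> F"
        then have i: "i \<in> I" using F by auto
        have "lam i * \<mu> i \<le> 1 * \<mu> i" using lam_bound[OF i] \<mu>pos[OF i]
          by (intro mult_right_mono) auto
        then show "lam i powr (1 - \<beta>) * (t \<bullet> e i)\<^sup>2 \<le> lam i powr (- \<beta>) * (t \<bullet> e i)\<^sup>2"
          using l1[OF i] unfolding \<mu>_def by (intro mult_right_mono) auto
      qed
      then show "\<exists>m\<in>{F. finite F \<and> F \<subseteq> I}. (\<Sum>i\<in>F. ennreal (lam i powr (1 - \<beta>) * (t \<bullet> e i)\<^sup>2)) \<le> (\<Sum>i\<in>m. ennreal (lam i powr (- \<beta>) * (t \<bullet> e i)\<^sup>2))"
        using F by blast
    qed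
    then have Q1fin: "Q1 < \<infinity>" using Qfin by (rule le_less_trans)
    define q1 where "q1 = enn2real Q1"
    have Q1q: "Q1 = ennreal q1" unfolding q1_def using Q1fin by simp
    have q1nn: "0 \<le> q1" unfolding q1_def by simp
    have enorm: "norm (e i) = 1" if "i \<in> I" for i
      using orthonormal[OF that that] by (simp add: norm_eq_sqrt_inner)
    have Xm2[measurable]: "(\<lambda>w. (norm (X w))\<^sup>2) \<in> borel_measurable M" by measurable
    have iX2: "integrable M (\<lambda>w. (norm (X w))\<^sup>2)"
      by (rule integrableI_nonneg) (use X_sq in auto)
    have iXX: "integrable M (\<lambda>w. (e i \<bullet> X w) *\<^sub>R X w)" if i: "i \<in> I" for i
    proof (rule ccontr)
      assume "\<not> ?thesis"
      then have "(\<integral> w. (e i \<bullet> X w) *\<^sub>R X w \<partial>M) = 0" by (rule not_integrable_integral_eq)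
      then have "lam i *\<^sub>R e i = 0" using Seig[OF i] by simp
      then show False using lam_pos[OF i] enorm[OF i] by auto
    qed
    have eig: "(\<integral> w. (t \<bullet> X w) * (X w \<bullet> e i) \<partial>M) = lam i * (t \<bullet> e i)" if i: "i \<in> I" for i
    proof -
      have "t \<bullet> (\<integral> w. (e i \<bullet> X w) *\<^sub>R X w \<partial>M) = (\<integral> w. t \<bullet> ((e i \<bullet> X w) *\<^sub>R X w) \<partial>M)"
        by (rule integral_inner_right[symmetric]) (use iXX[OF i] in auto)
      moreover have "t \<bullet> (\<integral> w. (e i \<bullet> X w) *\<^sub>R X w \<partial>M) = lam i * (t \<bullet> e i)"
        using Seig[OF i] by simp
      ultimately show ?thesis by (simp add: inner_commute mult.commute)
    qed
    have iac: "integrable M (\<lambda>w. (t \<bullet> X w) * (X w \<bullet> e i))" if i: "i \<in> I" for i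
    proof -
      have "integrable M (\<lambda>w. t \<bullet> ((e i \<bullet> X w) *\<^sub>R X w))"
        using integrable_inner_right[of t M "\<lambda>w. (e i \<bullet> X w) *\<^sub>R X w"] iXX[OF i] by blast
      then show ?thesis by (simp add: inner_commute mult.commute)
    qed
    have fin: "(\<integral>\<^sup>+ w. (\<Sum>i\<in>F. ennreal (lam i powr (- \<beta>) * ((t - (\<gamma> * (t \<bullet> X w)) *\<^sub>R X w) \<bullet> e i)\<^sup>2)) \<partial>M) \<le> Q"
      if F: "finite F" "F \<subseteq> I" for F
    proof -
      define s1 where "s1 G = (\<Sum>i\<in>G. lam i powr (1 - \<beta>) * (t \<bullet> e i)\<^sup>2)" for G
      obtain G where G: "finite G" "F \<subseteq> G" "G \<subseteq> I" "\<gamma> * C / 2 * q1 \<le> s1 G"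
      proof (cases "q1 = 0")
        case True
        have "0 \<le> s1 F" unfolding s1_def by (intro sum_nonneg) simp
        then show ?thesis using that[of F] F True by simp
      next
        case False
        then have "\<gamma> * C / 2 * q1 < 1 * q1"
          using q1nn \<gamma>C by (intro mult_strict_right_mono) auto
        then have "ennreal (\<gamma> * C / 2 * q1) < Q1"
          unfolding Q1q using \<gamma>_pos Cpos q1nn by (subst ennreal_less_iff) auto
        then obtain G0 where G0: "finite G0" "G0 \<subseteq> I"
          "ennreal (\<gamma> * C / 2 * q1) < (\<Sum>i\<in>G0. ennreal (lam i powr (1 - \<beta>) * (t \<bullet> e i)\<^sup>2))"
          unfolding Q1_def qform_SUP_fin less_SUP_iff by blast
        have "(\<Sum>i\<in>G0. ennreal (lam i powr (1 - \<beta>) * (t \<bullet> e i)\<^sup>2)) = ennreal (s1 G0)"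
          unfolding s1_def by simp
        then have "ennreal (\<gamma> * C / 2 * q1) < ennreal (s1 G0)" using G0(3) by simp
        moreover have "0 \<le> \<gamma> * C / 2 * q1" using \<gamma>_pos Cpos q1nn by simp
        ultimately have "\<gamma> * C / 2 * q1 < s1 G0" using ennreal_less_iff by blast
        moreover have "s1 G0 \<le> s1 (F \<union> G0)" unfolding s1_def
          by (rule sum_mono2) (use F G0 in auto)
        ultimately show ?thesis using that[of "F \<union> G0"] F G0 by auto
      qed
      define a where "a w = t \<bullet> X w" for w
      define c where "c i w = X w \<bullet> e i" for i w
      define s0 where "s0 = (\<Sum>i\<in>G. \<mu> i * (t \<bullet> e i)\<^sup>2)"
      define Pf where "Pf w = (a w)\<^sup>2 * (\<Sum>i\<in>G. \<mu> i * (c i w)\<^sup>2)" for w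
      define g where "g w = s0 - 2 * \<gamma> * (\<Sum>i\<in>G. \<mu> i * (t \<bullet> e i) * (a w * c i w)) + \<gamma>\<^sup>2 * Pf w" for w
      have termeq: "\<mu> i * ((t - (\<gamma> * a w) *\<^sub>R X w) \<bullet> e i)\<^sup>2 =
          \<mu> i * (t \<bullet> e i)\<^sup>2 - 2 * \<gamma> * (\<mu> i * (t \<bullet> e i) * (a w * c i w)) + \<gamma>\<^sup>2 * ((a w)\<^sup>2 * (\<mu> i * (c i w)\<^sup>2))" for i w
        by (simp add: c_def inner_diff_left power2_eq_square algebra_simps)
      have geq: "(\<Sum>i\<in>G. \<mu> i * ((t - (\<gamma> * a w) *\<^sub>R X w) \<bullet> e i)\<^sup>2) = g w" for w
      proof -
        have "(\<Sum>i\<in>G. \<mu> i * ((t - (\<gamma> * a w) *\<^sub>R X w) \<bullet> e i)\<^sup>2) =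
          (\<Sum>i\<in>G. \<mu> i * (t \<bullet> e i)\<^sup>2 - 2 * \<gamma> * (\<mu> i * (t \<bullet> e i) * (a w * c i w)) + \<gamma>\<^sup>2 * ((a w)\<^sup>2 * (\<mu> i * (c i w)\<^sup>2)))"
          by (rule sum.cong) (simp_all only: termeq)
        also have "\<dots> = g w" unfolding g_def s0_def Pf_def
          by (simp add: sum.distrib sum_subtractf sum_distrib_left)
        finally show ?thesis .
      qed
      have gnn: "0 \<le> g w" for w
        unfolding geq[symmetric]
      proof (intro sum_nonneg)
        fix i assume "i \<in> G"
        then have "0 < \<mu> i" using G \<mu>pos by auto
        then show "0 \<le> \<mu> i * ((t - (\<gamma> * a w) *\<^sub>R X w) \<bullet> e i)\<^sup>2" by simp
      qed
      have Snn: "0 \<le> (\<Sum>i\<in>G. \<mu> i * (c i w)\<^sup>2)" for w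
      proof (intro sum_nonneg)
        fix i assume "i \<in> G"
        then have "0 < \<mu> i" using G \<mu>pos by auto
        then show "0 \<le> \<mu> i * (c i w)\<^sup>2" by simp
      qed
      have Pfm[measurable]: "Pf \<in> borel_measurable M" unfolding Pf_def a_def c_def by measurable
      have PfQ: "(\<integral>\<^sup>+ w. ennreal (Pf w) \<partial>M) \<le> ennreal C * Q1"
      proof -
        have "(\<integral>\<^sup>+ w. ennreal (Pf w) \<partial>M) \<le> (\<integral>\<^sup>+ w. ennreal ((t \<bullet> X w)\<^sup>2) * qform I e lam (- \<beta>) (X w) \<partial>M)"
        proof (rule nn_integral_mono)
          fix w
          have "ennreal (\<Sum>i\<in>G. \<mu> i * (c i w)\<^sup>2) = (\<Sum>i\<in>G. ennreal (lam i powr (- \<beta>) * (X w \<bullet> e i)\<^sup>2))"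
            unfolding \<mu>_def c_def by simp
          also have "\<dots> \<le> qform I e lam (- \<beta>) (X w)"
            unfolding qform_SUP_fin by (rule SUP_upper) (use G in auto)
          finally have "ennreal (\<Sum>i\<in>G. \<mu> i * (c i w)\<^sup>2) \<le> qform I e lam (- \<beta>) (X w)" .
          then have "ennreal ((a w)\<^sup>2) * ennreal (\<Sum>i\<in>G. \<mu> i * (c i w)\<^sup>2) \<le> ennreal ((t \<bullet> X w)\<^sup>2) * qform I e lam (- \<beta>) (X w)"
            unfolding a_def by (rule mult_left_mono) simp
          moreover have "ennreal (Pf w) = ennreal ((a w)\<^sup>2) * ennreal (\<Sum>i\<in>G. \<mu> i * (c i w)\<^sup>2)"
            unfolding Pf_def using Snn[of w] by (simp add: ennreal_mult)
          ultimately show "ennreal (Pf w) \<le> ennreal ((t \<bullet> X w)\<^sup>2) * qform I e lam (- \<beta>) (X w)" by simp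
        qed
        also have "\<dots> \<le> ennreal C * Q1" using C_bound unfolding Q1_def by blast
        finally show ?thesis .
      qed
      have Pfnn: "0 \<le> Pf w" for w unfolding Pf_def using Snn[of w] by simp
      have iPf: "integrable M Pf"
      proof (rule integrableI_nonneg)
        have "ennreal C * Q1 < \<infinity>" unfolding Q1q using Cpos q1nn by (simp add: ennreal_mult[symmetric])
        then show "(\<integral>\<^sup>+ w. ennreal (Pf w) \<partial>M) < \<infinity>" using PfQ by (rule le_less_trans[rotated])
      qed (use Pfnn in auto)
      have PfC: "(\<integral> w. Pf w \<partial>M) \<le> C * q1"
      proof -
        have "ennreal (\<integral> w. Pf w \<partial>M) = (\<integral>\<^sup>+ w. ennreal (Pf w) \<partial>M)"
          by (rule nn_integral_eq_integral[symmetric]) (use iPf Pfnn in auto)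
        also have "\<dots> \<le> ennreal (C * q1)" using PfQ Q1q Cpos q1nn by (simp add: ennreal_mult)
        finally show ?thesis using Cpos q1nn by (subst (asm) ennreal_le_iff) auto
      qed
      have iac': "integrable M (\<lambda>w. a w * c i w)" if "i \<in> I" for i
        unfolding a_def c_def using iac[OF that] .
      have isum: "integrable M (\<lambda>w. \<Sum>i\<in>G. \<mu> i * (t \<bullet> e i) * (a w * c i w))"
      proof (rule Bochner_Integration.integrable_sum)
        fix i assume "i \<in> G"
        then have "integrable M (\<lambda>w. a w * c i w)" using G iac' by auto
        then show "integrable M (\<lambda>w. \<mu> i * (t \<bullet> e i) * (a w * c i w))" by (rule integrable_mult_right)
      qed
      have ig: "integrable M g" unfolding g_def
        by (intro Bochner_Integration.integrable_add Bochner_Integration.integrable_diff integrable_const integrable_mult_right isum iPf)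
      have intg: "(\<integral> w. g w \<partial>M) = s0 - 2 * \<gamma> * s1 G + \<gamma>\<^sup>2 * (\<integral> w. Pf w \<partial>M)"
      proof -
        have "(\<integral> w. g w \<partial>M) = s0 - 2 * \<gamma> * (\<Sum>i\<in>G. \<mu> i * (t \<bullet> e i) * (\<integral> w. a w * c i w \<partial>M)) + \<gamma>\<^sup>2 * (\<integral> w. Pf w \<partial>M)"
        proof -
          have i0: "integrable M (\<lambda>w. 2 * \<gamma> * (\<Sum>i\<in>G. \<mu> i * (t \<bullet> e i) * (a w * c i w)))"
            by (intro integrable_mult_right isum)
          have i1: "integrable M (\<lambda>w. s0 - 2 * \<gamma> * (\<Sum>i\<in>G. \<mu> i * (t \<bullet> e i) * (a w * c i w)))"
            by (intro Bochner_Integration.integrable_diff integrable_const i0)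
          have i2: "integrable M (\<lambda>w. \<gamma>\<^sup>2 * Pf w)" by (intro integrable_mult_right iPf)
          have "(\<integral> w. g w \<partial>M) = (\<integral> w. s0 - 2 * \<gamma> * (\<Sum>i\<in>G. \<mu> i * (t \<bullet> e i) * (a w * c i w)) \<partial>M) + (\<integral> w. \<gamma>\<^sup>2 * Pf w \<partial>M)"
            unfolding g_def by (rule Bochner_Integration.integral_add[OF i1 i2])
          also have "(\<integral> w. s0 - 2 * \<gamma> * (\<Sum>i\<in>G. \<mu> i * (t \<bullet> e i) * (a w * c i w)) \<partial>M)
              = (\<integral> w. s0 \<partial>M) - (\<integral> w. 2 * \<gamma> * (\<Sum>i\<in>G. \<mu> i * (t \<bullet> e i) * (a w * c i w)) \<partial>M)"
            by (rule Bochner_Integration.integral_diff[OF integrable_const i0])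
          also have "(\<integral> w. s0 \<partial>M) = s0" by (simp add: prob_space)
          also have "(\<integral> w. 2 * \<gamma> * (\<Sum>i\<in>G. \<mu> i * (t \<bullet> e i) * (a w * c i w)) \<partial>M)
              = 2 * \<gamma> * (\<integral> w. (\<Sum>i\<in>G. \<mu> i * (t \<bullet> e i) * (a w * c i w)) \<partial>M)"
            by (rule integral_mult_right_zero)
          also have "(\<integral> w. (\<Sum>i\<in>G. \<mu> i * (t \<bullet> e i) * (a w * c i w)) \<partial>M)
              = (\<Sum>i\<in>G. (\<integral> w. \<mu> i * (t \<bullet> e i) * (a w * c i w) \<partial>M))"
          proof (rule Bochner_Integration.integral_sum)
            fix i assume "i \<in> G"
            then have "integrable M (\<lambda>w. a w * c i w)" using G iac' by auto
            then show "integrable M (\<lambda>w. \<mu> i * (t \<bullet> e i) * (a w * c i w))" by (rule integrable_mult_right)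
          qed
          also have "(\<Sum>i\<in>G. (\<integral> w. \<mu> i * (t \<bullet> e i) * (a w * c i w) \<partial>M))
              = (\<Sum>i\<in>G. \<mu> i * (t \<bullet> e i) * (\<integral> w. a w * c i w \<partial>M))"
            by (rule sum.cong) (rule refl, rule integral_mult_right_zero)
          also have "(\<integral> w. \<gamma>\<^sup>2 * Pf w \<partial>M) = \<gamma>\<^sup>2 * (\<integral> w. Pf w \<partial>M)"
            by (rule integral_mult_right_zero)
          finally show ?thesis .
        qed
        also have "(\<Sum>i\<in>G. \<mu> i * (t \<bullet> e i) * (\<integral> w. a w * c i w \<partial>M)) = s1 G"
          unfolding s1_def a_def c_def using G
          by (intro sum.cong) (auto simp: eig l1 power2_eq_square)
        finally show ?thesis .
      qed
      have "(\<integral> w. g w \<partial>M) \<le> s0"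
      proof -
        have "\<gamma>\<^sup>2 * (\<integral> w. Pf w \<partial>M) \<le> \<gamma>\<^sup>2 * (C * q1)" using PfC by (intro mult_left_mono) auto
        moreover have "\<gamma> * (\<gamma> * C / 2 * q1) \<le> \<gamma> * s1 G" using G(4) \<gamma>_pos by (intro mult_left_mono) auto
        moreover have "\<gamma>\<^sup>2 * (C * q1) = 2 * (\<gamma> * (\<gamma> * C / 2 * q1))"
          by (simp add: power2_eq_square)
        moreover have "2 * \<gamma> * s1 G = 2 * (\<gamma> * s1 G)" by simp
        ultimately show ?thesis unfolding intg by linarith
      qed
      have s0Q: "ennreal s0 \<le> Q"
      proof -
        have "ennreal s0 = (\<Sum>i\<in>G. ennreal (lam i powr (- \<beta>) * (t \<bullet> e i)\<^sup>2))"
          unfolding s0_def \<mu>_def by simp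
        also have "\<dots> \<le> Q" unfolding Q_def qform_SUP_fin by (rule SUP_upper) (use G in auto)
        finally show ?thesis .
      qed
      have "(\<integral>\<^sup>+ w. (\<Sum>i\<in>F. ennreal (lam i powr (- \<beta>) * ((t - (\<gamma> * (t \<bullet> X w)) *\<^sub>R X w) \<bullet> e i)\<^sup>2)) \<partial>M)
          \<le> (\<integral>\<^sup>+ w. (\<Sum>i\<in>G. ennreal (lam i powr (- \<beta>) * ((t - (\<gamma> * (t \<bullet> X w)) *\<^sub>R X w) \<bullet> e i)\<^sup>2)) \<partial>M)"
        by (intro nn_integral_mono sum_mono2) (use G in auto)
      also have "\<dots> = (\<integral>\<^sup>+ w. ennreal (g w) \<partial>M)"
        by (intro nn_integral_cong) (simp add: geq[symmetric] \<mu>_def a_def)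
      also have "\<dots> = ennreal (\<integral> w. g w \<partial>M)"
        by (rule nn_integral_eq_integral) (use ig gnn in auto)
      also have "\<dots> \<le> ennreal s0" by (rule ennreal_leI) fact
      also have "\<dots> \<le> Q" by fact
      finally show ?thesis .
    qed
    have "(\<integral>\<^sup>+ w. qform I e lam (- \<beta>) (t - (\<gamma> * (t \<bullet> X w)) *\<^sub>R X w) \<partial>M) =
      (\<integral>\<^sup>+ w. (SUP n. \<Sum>i\<in>Fk I n. ennreal (lam i powr (- \<beta>) * ((t - (\<gamma> * (t \<bullet> X w)) *\<^sub>R X w) \<bullet> e i)\<^sup>2)) \<partial>M)"
      by (simp add: qform_SUP_nat[OF cI])
    also have "\<dots> = (SUP n. (\<integral>\<^sup>+ w. (\<Sum>i\<in>Fk I n. ennreal (lam i powr (- \<beta>) * ((t - (\<gamma> * (t \<bullet> X w)) *\<^sub>R X w) \<bullet> e i)\<^sup>2)) \<partial>M))"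
    proof (rule nn_integral_monotone_convergence_SUP)
      show "incseq (\<lambda>n w. \<Sum>i\<in>Fk I n. ennreal (lam i powr (- \<beta>) * ((t - (\<gamma> * (t \<bullet> X w)) *\<^sub>R X w) \<bullet> e i)\<^sup>2))"
        unfolding incseq_def le_fun_def
      proof (intro allI impI)
        fix m n :: nat and w assume "m \<le> n"
        then have sub: "Fk I m \<subseteq> Fk I n" by (rule monoD[OF Fk_mono])
        show "(\<Sum>i\<in>Fk I m. ennreal (lam i powr (- \<beta>) * ((t - (\<gamma> * (t \<bullet> X w)) *\<^sub>R X w) \<bullet> e i)\<^sup>2))
          \<le> (\<Sum>i\<in>Fk I n. ennreal (lam i powr (- \<beta>) * ((t - (\<gamma> * (t \<bullet> X w)) *\<^sub>R X w) \<bullet> e i)\<^sup>2))"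
          by (rule sum_mono2[OF Fk_finite[OF cI] sub]) simp
      qed
    next
      fix n
      show "(\<lambda>w. \<Sum>i\<in>Fk I n. ennreal (lam i powr (- \<beta>) * ((t - (\<gamma> * (t \<bullet> X w)) *\<^sub>R X w) \<bullet> e i)\<^sup>2)) \<in> borel_measurable M"
        by (intro borel_measurable_sum) measurable
    qed
    also have "\<dots> \<le> Q" by (rule SUP_least) (rule fin[OF Fk_finite[OF cI] Fk_sub])
    finally show ?thesis unfolding Q_def .
  qed
qed

lemma sgd_dep: "(\<And>i. i < n \<Longrightarrow> Xs i w = Ys i v) \<Longrightarrow> sgd g th0 Xs n w = sgd g th0 Ys n v"
  by (induction n) auto

lemma sgd_G_meas:
  fixes th0 :: "'a::{real_inner, second_countable_topology}"
  shows "m \<le> N \<Longrightarrow> (\<lambda>f. sgd g th0 (\<lambda>i (_::unit). f i) m ()) \<in> borel_measurable (PiM {..<N} (\<lambda>_. (borel :: 'a measure)))"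
proof (induction m)
  case 0 then show ?case by simp
next
  case (Suc m)
  then have IH[measurable]: "(\<lambda>f. sgd g th0 (\<lambda>i (_::unit). f i) m ()) \<in> borel_measurable (PiM {..<N} (\<lambda>_. (borel :: 'a measure)))" by simp
  have [measurable]: "(\<lambda>f. f m) \<in> borel_measurable (PiM {..<N} (\<lambda>_. (borel :: 'a measure)))"
    using Suc.prems by (intro measurable_component_singleton) simp
  show ?case unfolding sgd.simps by measurable
qed

lemma sgd_meas:
  fixes th0 :: "'a::{real_inner, second_countable_topology}"
  assumes [measurable]: "\<And>n. Xs n \<in> borel_measurable M"
  shows "(\<lambda>w. sgd g th0 Xs n w) \<in> borel_measurable M"
proof (induction n)
  case 0 then show ?case by simp
next
  case (Suc n)
  then have [measurable]: "(\<lambda>w. sgd g th0 Xs n w) \<in> borel_measurable M" by simp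
  show ?case unfolding sgd.simps by measurable
qed

theorem corollary1:
  fixes M :: "'w measure"
    and X :: "'w \<Rightarrow> 'a::{real_inner, complete_space, second_countable_topology}"
    and Xs :: "nat \<Rightarrow> 'w \<Rightarrow> 'a"
    and S :: "'a \<Rightarrow> 'a"
    and I :: "'i set" and e :: "'i \<Rightarrow> 'a" and lam :: "'i \<Rightarrow> real"
    and \<alpha> \<beta> C \<gamma> :: real and th0 :: 'a
  assumes "prob_space M"
    and X_meas: "X \<in> borel_measurable M"
    and X_sq: "(\<integral>\<^sup>+ w. ennreal ((norm (X w))\<^sup>2) \<partial>M) < \<infinity>"
    and S_def: "\<And>th. S th = (\<integral> w. (th \<bullet> X w) *\<^sub>R X w \<partial>M)"
    and orthonormal: "\<And>i j. i \<in> I \<Longrightarrow> j \<in> I \<Longrightarrow> e i \<bullet> e j = (if i = j then 1 else 0)"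
    and complete: "closure (span (e ` I)) = UNIV"
    and eigen: "\<And>i. i \<in> I \<Longrightarrow> S (e i) = lam i *\<^sub>R e i"
    and lam_pos: "\<And>i. i \<in> I \<Longrightarrow> 0 < lam i"
    and lam_bound: "\<And>i. i \<in> I \<Longrightarrow> lam i < 1/2"
    and \<alpha>_pos: "\<alpha> > 0"
    and moment: "\<forall>b<\<alpha>. \<exists>Cb. \<forall>th.
        (\<integral>\<^sup>+ w. ennreal ((th \<bullet> X w)\<^sup>2) * qform I e lam (- b) (X w) \<partial>M)
          \<le> ennreal Cb * qform I e lam (1 - b) th"
    and \<beta>_lt: "\<beta> < \<alpha>"
    and C_bound: "\<forall>th.
        (\<integral>\<^sup>+ w. ennreal ((th \<bullet> X w)\<^sup>2) * qform I e lam (- \<beta>) (X w) \<partial>M)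
          \<le> ennreal C * qform I e lam (1 - \<beta>) th"
    and \<gamma>_pos: "0 < \<gamma>" and \<gamma>_lt1: "\<gamma> < 1" and \<gamma>_lt: "\<gamma> < 2 / C"
    and indep: "prob_space.indep_vars M (\<lambda>_. borel) Xs UNIV"
    and ident: "\<And>n. distr M borel (Xs n) = distr M borel X"
  shows "decseq (\<lambda>n. \<integral>\<^sup>+ w. qform I e lam (- \<beta>) (sgd \<gamma> th0 Xs n w) \<partial>M) \<and>
     (\<forall>n. (\<integral>\<^sup>+ w. qform I e lam (- \<beta>) (sgd \<gamma> th0 Xs n w) \<partial>M) \<le> qform I e lam (- \<beta>) th0)"
proof -
  interpret P: prob_space M by fact
  have cI: "countable I" by (rule countable_orthonormal[OF orthonormal])
  have Cpos: "0 < C"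
  proof (rule ccontr)
    assume "\<not> 0 < C"
    then have "2 / C \<le> 0" by (intro divide_nonneg_nonpos) auto
    then show False using \<gamma>_pos \<gamma>_lt by linarith
  qed
  have \<gamma>C: "\<gamma> * C < 2" using \<gamma>_lt Cpos by (simp add: pos_less_divide_eq)
  have Seig: "(\<integral> w. (e i \<bullet> X w) *\<^sub>R X w \<partial>M) = lam i *\<^sub>R e i" if i: "i \<in> I" for i
  proof -
    have "S (e i) = lam i *\<^sub>R e i" by (rule eigen[OF i])
    then show ?thesis unfolding S_def .
  qed
  have Xsm[measurable]: "Xs n \<in> borel_measurable M" for n
    using indep unfolding P.indep_vars_def by auto
  note X_meas[measurable]
  define q where "q = qform I e lam (- \<beta>)"
  have qm[measurable]: "q \<in> borel_measurable borel" unfolding q_def by (rule qform_meas[OF cI])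
  define th where "th n = sgd \<gamma> th0 Xs n" for n
  have thmeas[measurable]: "th n \<in> borel_measurable M" for n
    unfolding th_def using sgd_meas[of Xs M \<gamma> th0 n] Xsm by simp
  have pw: "(\<integral>\<^sup>+ w. q (t - (\<gamma> * (t \<bullet> X w)) *\<^sub>R X w) \<partial>M) \<le> q t" for t
    unfolding q_def
    by (rule pointwise[OF assms(1) X_meas X_sq Seig orthonormal cI lam_pos lam_bound C_bound \<gamma>_pos Cpos \<gamma>C])
  have step: "(\<integral>\<^sup>+ w. q (th (Suc n) w) \<partial>M) \<le> (\<integral>\<^sup>+ w. q (th n w) \<partial>M)" for n
  proof -
    define R where "R f = sgd \<gamma> th0 (\<lambda>i (_::unit). f i) n ()" for f :: "nat \<Rightarrow> 'a"
    have Rm: "R \<in> borel_measurable (PiM {..<n} (\<lambda>_. (borel :: 'a measure)))"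
      unfolding R_def by (rule sgd_G_meas) simp
    have iv: "P.indep_var (PiM {..<n} (\<lambda>_. borel)) (\<lambda>\<omega>. restrict (\<lambda>i. Xs i \<omega>) {..<n})
        (PiM {n} (\<lambda>_. borel)) (\<lambda>\<omega>. restrict (\<lambda>i. Xs i \<omega>) {n})"
      by (rule P.indep_var_restrict[OF indep]) auto
    have cm: "(\<lambda>f. f n) \<in> borel_measurable (PiM {n} (\<lambda>_. (borel :: 'a measure)))"
      by (rule measurable_component_singleton) simp
    have iv2: "P.indep_var borel (R \<circ> (\<lambda>\<omega>. restrict (\<lambda>i. Xs i \<omega>) {..<n})) borel ((\<lambda>f. f n) \<circ> (\<lambda>\<omega>. restrict (\<lambda>i. Xs i \<omega>) {n}))"
      by (rule P.indep_var_compose[OF iv Rm cm])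
    have e1: "R \<circ> (\<lambda>\<omega>. restrict (\<lambda>i. Xs i \<omega>) {..<n}) = th n"
    proof
      fix w
      show "(R \<circ> (\<lambda>\<omega>. restrict (\<lambda>i. Xs i \<omega>) {..<n})) w = th n w"
        unfolding R_def th_def comp_def by (rule sgd_dep) simp
    qed
    have e2: "(\<lambda>f. f n) \<circ> (\<lambda>\<omega>. restrict (\<lambda>i. Xs i \<omega>) {n}) = Xs n" by (auto simp: comp_def)
    have iv3: "P.indep_var borel (th n) borel (Xs n)" using iv2 unfolding e1 e2 .
    then have dist: "distr M borel (th n) \<Otimes>\<^sub>M distr M borel (Xs n) = distr M (borel \<Otimes>\<^sub>M borel) (\<lambda>x. (th n x, Xs n x))"
      unfolding P.indep_var_distribution_eq by blast
    define H where "H z = q (fst z - (\<gamma> * (fst z \<bullet> snd z)) *\<^sub>R snd z)" for z :: "'a \<times> 'a"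
    have Hm[measurable]: "H \<in> borel_measurable (borel \<Otimes>\<^sub>M borel)" unfolding H_def by measurable
    have pm: "(\<lambda>x. (th n x, Xs n x)) \<in> measurable M (borel \<Otimes>\<^sub>M borel)" by measurable
    interpret PX: prob_space "distr M borel (Xs n)" by (rule P.prob_space_distr) simp
    have mc: "measurable (distr M borel (th n) \<Otimes>\<^sub>M distr M borel (Xs n)) (borel :: ennreal measure) = measurable (borel \<Otimes>\<^sub>M borel) borel"
      by (intro measurable_cong_sets sets_pair_measure_cong) simp_all
    have Hm2: "H \<in> borel_measurable (distr M borel (th n) \<Otimes>\<^sub>M distr M borel (Xs n))"
      unfolding mc by (rule Hm)
    have "(\<integral>\<^sup>+ w. q (th (Suc n) w) \<partial>M) = (\<integral>\<^sup>+ w. H (th n w, Xs n w) \<partial>M)"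
      unfolding H_def th_def by simp
    also have "\<dots> = (\<integral>\<^sup>+ z. H z \<partial>(distr M (borel \<Otimes>\<^sub>M borel) (\<lambda>x. (th n x, Xs n x))))"
      using nn_integral_distr[OF pm, of H] Hm by simp
    also have "\<dots> = (\<integral>\<^sup>+ z. H z \<partial>(distr M borel (th n) \<Otimes>\<^sub>M distr M borel (Xs n)))"
      by (simp only: dist)
    also have "\<dots> = (\<integral>\<^sup>+ t. (\<integral>\<^sup>+ x. H (t, x) \<partial>distr M borel (Xs n)) \<partial>distr M borel (th n))"
      by (rule PX.nn_integral_fst[symmetric, OF Hm2])
    also have "\<dots> \<le> (\<integral>\<^sup>+ t. q t \<partial>distr M borel (th n))"
    proof (rule nn_integral_mono)
      fix t
      have Ht[measurable]: "(\<lambda>x. H (t, x)) \<in> borel_measurable borel" by measurable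
      have "(\<integral>\<^sup>+ x. H (t, x) \<partial>distr M borel (Xs n)) = (\<integral>\<^sup>+ x. H (t, x) \<partial>distr M borel X)"
        by (simp only: ident)
      also have "\<dots> = (\<integral>\<^sup>+ w. H (t, X w) \<partial>M)"
        using nn_integral_distr[OF X_meas, of "\<lambda>x. H (t, x)"] Ht by simp
      also have "\<dots> \<le> q t" unfolding H_def using pw[of t] by simp
      finally show "(\<integral>\<^sup>+ x. H (t, x) \<partial>distr M borel (Xs n)) \<le> q t" .
    qed
    also have "\<dots> = (\<integral>\<^sup>+ w. q (th n w) \<partial>M)"
      using nn_integral_distr[OF thmeas, of q] qm by simp
    finally show ?thesis .
  qed
  have dec: "decseq (\<lambda>n. \<integral>\<^sup>+ w. qform I e lam (- \<beta>) (sgd \<gamma> th0 Xs n w) \<partial>M)"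
  proof (rule decseq_SucI)
    fix n
    show "(\<integral>\<^sup>+ w. qform I e lam (- \<beta>) (sgd \<gamma> th0 Xs (Suc n) w) \<partial>M) \<le> (\<integral>\<^sup>+ w. qform I e lam (- \<beta>) (sgd \<gamma> th0 Xs n w) \<partial>M)"
      using step[of n] unfolding q_def th_def .
  qed
  have bnd: "(\<integral>\<^sup>+ w. qform I e lam (- \<beta>) (sgd \<gamma> th0 Xs n w) \<partial>M) \<le> qform I e lam (- \<beta>) th0" for n
  proof -
    have "(\<integral>\<^sup>+ w. qform I e lam (- \<beta>) (sgd \<gamma> th0 Xs n w) \<partial>M) \<le> (\<integral>\<^sup>+ w. qform I e lam (- \<beta>) (sgd \<gamma> th0 Xs 0 w) \<partial>M)"
      using decseqD[OF dec, of 0 n] by simp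
    also have "\<dots> = qform I e lam (- \<beta>) th0" by (simp add: P.emeasure_space_1)
    finally show ?thesis .
  qed
  show ?thesis using dec bnd by blast
qed

end
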